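(* For every integer $F\ge6$, $$s(F,F,2)=3F-8+s(F-3,F-3,2).$$ (In particular, with $s(3,3,2)=1$, $s(4,4,2)=4$, $s(5,5,2)=7$, this determines $s(F,F,2)$ for all $F\ge3$.)
   Context: A placement delivery array $S$-PDA$(F,K,Z)$ is an $F\times K$ array $R=(r_{j,k})$, $1\le j\le F$, $1\le k\le K$, over a finite set $S$ such that: (1) each cell is either empty or contains an element of $S$; (2) each column contains exactly $Z$ empty cells; (3) each element of $S$ occurs at most once in each row and at most once in each column; (4) if two distinct nonempty cells satisfy $r_{j_1,k_1}=r_{j_2,k_2}=t\in S$, then the cells $r_{j_1,k_2}$ and $r_{j_2,k_1}$ are empty. For integers $F,K\ge1$, $0\le Z\le F$, define $s(F,K,Z)=\min\{|S| : \text{there exists an } S\text{-PDA}(F,K,Z)\}$. *)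

theory Defs
  imports Main
begin

text \<open>An F x K array over symbol set S: rows 0..F-1, columns 0..K-1;
  None = empty cell, Some t = cell containing t.  Symbols are natural numbers
  (any finite symbol set can be relabelled injectively into nat).\<close>

definition is_PDA :: "nat set \<Rightarrow> nat \<Rightarrow> nat \<Rightarrow> nat \<Rightarrow> (nat \<Rightarrow> nat \<Rightarrow> nat option) \<Rightarrow> bool" where
  "is_PDA S F K Z r \<longleftrightarrow>
     finite S \<and>
     (\<forall>j<F. \<forall>k<K. \<forall>t. r j k = Some t \<longrightarrow> t \<in> S) \<and>
     (\<forall>k<K. card {j. j < F \<and> r j k = None} = Z) \<and>
     (\<forall>j<F. \<forall>k1<K. \<forall>k2<K. \<forall>t. r j k1 = Some t \<and> r j k2 = Some t \<longrightarrow> k1 = k2) \<and>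
     (\<forall>k<K. \<forall>j1<F. \<forall>j2<F. \<forall>t. r j1 k = Some t \<and> r j2 k = Some t \<longrightarrow> j1 = j2) \<and>
     (\<forall>j1<F. \<forall>j2<F. \<forall>k1<K. \<forall>k2<K. \<forall>t.
        (j1, k1) \<noteq> (j2, k2) \<and> r j1 k1 = Some t \<and> r j2 k2 = Some t \<longrightarrow>
        r j1 k2 = None \<and> r j2 k1 = None)"

definition s_PDA :: "nat \<Rightarrow> nat \<Rightarrow> nat \<Rightarrow> nat" where
  "s_PDA F K Z = (LEAST n. \<exists>S r. is_PDA S F K Z r \<and> card S = n)"

end

theory Submission
  imports Defs Complex_Main
begin


locale P2 =
  fixes S :: "nat set" and F :: nat and r :: "nat \<Rightarrow> nat \<Rightarrow> nat option"
  assumes pda: "is_PDA S F F 2 r"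
begin

lemma pd: "finite S \<and>
     (\<forall>j<F. \<forall>k<F. \<forall>t. r j k = Some t \<longrightarrow> t \<in> S) \<and>
     (\<forall>k<F. card {j. j < F \<and> r j k = None} = 2) \<and>
     (\<forall>j<F. \<forall>k1<F. \<forall>k2<F. \<forall>t. r j k1 = Some t \<and> r j k2 = Some t \<longrightarrow> k1 = k2) \<and>
     (\<forall>k<F. \<forall>j1<F. \<forall>j2<F. \<forall>t. r j1 k = Some t \<and> r j2 k = Some t \<longrightarrow> j1 = j2) \<and>
     (\<forall>j1<F. \<forall>j2<F. \<forall>k1<F. \<forall>k2<F. \<forall>t.
        (j1, k1) \<noteq> (j2, k2) \<and> r j1 k1 = Some t \<and> r j2 k2 = Some t \<longrightarrow>
        r j1 k2 = None \<and> r j2 k1 = None)"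
  using pda unfolding is_PDA_def .

lemma finS: "finite S" using pd by (rule conjunct1)
lemma inS: "j<F \<Longrightarrow> k<F \<Longrightarrow> r j k = Some t \<Longrightarrow> t \<in> S"
  using pd[THEN conjunct2, THEN conjunct1] by blast
lemma col2: "k<F \<Longrightarrow> card {j. j<F \<and> r j k = None} = 2"
  using pd[THEN conjunct2, THEN conjunct2, THEN conjunct1] by blast
lemma rowu: "j<F \<Longrightarrow> k1<F \<Longrightarrow> k2<F \<Longrightarrow> r j k1 = Some t \<Longrightarrow> r j k2 = Some t \<Longrightarrow> k1 = k2"
  using pd[THEN conjunct2, THEN conjunct2, THEN conjunct2, THEN conjunct1] by blast
lemma colu: "k<F \<Longrightarrow> j1<F \<Longrightarrow> j2<F \<Longrightarrow> r j1 k = Some t \<Longrightarrow> r j2 k = Some t \<Longrightarrow> j1 = j2"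
  using pd[THEN conjunct2, THEN conjunct2, THEN conjunct2, THEN conjunct2, THEN conjunct1] by blast
lemma c4: "j1<F \<Longrightarrow> j2<F \<Longrightarrow> k1<F \<Longrightarrow> k2<F \<Longrightarrow> (j1,k1) \<noteq> (j2,k2) \<Longrightarrow> r j1 k1 = Some t \<Longrightarrow> r j2 k2 = Some t
   \<Longrightarrow> r j1 k2 = None \<and> r j2 k1 = None"
  using pd[THEN conjunct2, THEN conjunct2, THEN conjunct2, THEN conjunct2, THEN conjunct2] by blast

definition E where "E k = {j. j<F \<and> r j k = None}"
definition X where "X j = {k. k<F \<and> r j k = None}"
definition D where "D j = card (X j)"
definition occ where "occ t = {(j,k). j<F \<and> k<F \<and> r j k = Some t}"
definition mlt where "mlt j k = card (occ (the (r j k)))"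
definition Fl where "Fl j = {k. k<F \<and> r j k \<noteq> None}"
definition sg where "sg j = card {k \<in> Fl j. mlt j k = 1}"
definition tr where "tr j = card {k \<in> Fl j. mlt j k = 3}"
definition ec where "ec W = card {k. k<F \<and> E k \<subseteq> W}"
definition Nb where "Nb v = {w. w<F \<and> w \<noteq> v \<and> (\<exists>k<F. r v k = None \<and> r w k = None)}"

lemma finE[simp]: "finite (E k)" unfolding E_def by auto
lemma finX[simp]: "finite (X k)" unfolding X_def by auto
lemma finFl[simp]: "finite (Fl k)" unfolding Fl_def by auto
lemma finocc[simp]: "finite (occ t)"
proof -
  have "occ t \<subseteq> {..<F} \<times> {..<F}" unfolding occ_def by auto
  thus ?thesis by (rule finite_subset) auto
qed
lemma cardE: "k<F \<Longrightarrow> card (E k) = 2" unfolding E_def using col2 by simp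

lemma occI: "j<F \<Longrightarrow> k<F \<Longrightarrow> r j k = Some t \<Longrightarrow> (j,k) \<in> occ t" unfolding occ_def by auto

lemma Fl_obt: assumes "k \<in> Fl j" obtains t where "r j k = Some t" "k<F"
  using assms unfolding Fl_def by auto

lemma mlt_ge1: "j<F \<Longrightarrow> k \<in> Fl j \<Longrightarrow> mlt j k \<ge> 1"
proof -
  assume j: "j<F" and k: "k \<in> Fl j"
  from k obtain t where t: "r j k = Some t" and kF: "k<F" by (rule Fl_obt)
  have "(j,k) \<in> occ t" using occI[OF j kF t] .
  hence "card (occ t) > 0" by (simp add: card_gt_0_iff) (blast)
  thus ?thesis unfolding mlt_def using t by simp
qed

lemma mlt_le3: "j<F \<Longrightarrow> k \<in> Fl j \<Longrightarrow> mlt j k \<le> 3"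
proof -
  assume j: "j<F" and k: "k \<in> Fl j"
  from k obtain t where t: "r j k = Some t" and kF: "k<F" by (rule Fl_obt)
  have inj: "inj_on fst (occ t - {(j,k)})"
  proof (rule inj_onI)
    fix p q assume p: "p \<in> occ t - {(j,k)}" and q: "q \<in> occ t - {(j,k)}" and e: "fst p = fst q"
    obtain a b where pab: "p = (a,b)" by (cases p)
    obtain a' b' where qab: "q = (a',b')" by (cases q)
    from p q e pab qab show "p = q" unfolding occ_def using rowu by auto
  qed
  have sub: "fst ` (occ t - {(j,k)}) \<subseteq> E k"
  proof
    fix a assume "a \<in> fst ` (occ t - {(j,k)})"
    then obtain b where ab: "(a,b) \<in> occ t" "(a,b) \<noteq> (j,k)" by force
    hence "a<F" "b<F" "r a b = Some t" unfolding occ_def by auto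
    from c4[OF j this(1) kF this(2) _ t this(3)] ab(2) have "r a k = None" by auto
    thus "a \<in> E k" unfolding E_def using \<open>a<F\<close> by auto
  qed
  have "card (occ t - {(j,k)}) \<le> 2"
    using card_inj_on_le[OF inj sub] cardE[OF kF] by simp
  moreover have "(j,k) \<in> occ t" using occI[OF j kF t] .
  hence "card (occ t) = Suc (card (occ t - {(j,k)}))" by (rule card.remove[OF finocc])
  ultimately have "card (occ t) \<le> 3" by linarith
  thus ?thesis unfolding mlt_def using t by simp
qed


definition Cl where "Cl = Sigma {..<F} Fl"
definition sym where "sym c = the (r (fst c) (snd c))"

lemma finCl[simp]: "finite Cl" unfolding Cl_def by auto

lemma card_img: "real (card (sym ` Cl)) = (\<Sum>c\<in>Cl. 1 / real (card (occ (sym c))))"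
proof -
  have "(\<Sum>c\<in>Cl. 1 / real (card (occ (sym c)))) =
     (\<Sum>y\<in>sym ` Cl. \<Sum>c\<in>{x. x \<in> Cl \<and> sym x = y}. 1 / real (card (occ (sym c))))"
    by (rule sum.image_gen) simp
  also have "\<dots> = (\<Sum>y\<in>sym ` Cl. 1)"
  proof (rule sum.cong[OF refl])
    fix y assume y: "y \<in> sym ` Cl"
    have eq: "{x. x \<in> Cl \<and> sym x = y} = occ y"
      unfolding Cl_def Fl_def occ_def sym_def by auto
    from y obtain c where c: "c \<in> Cl" "y = sym c" by auto
    have "(fst c, snd c) \<in> occ y" using c unfolding Cl_def Fl_def occ_def sym_def by auto
    hence ne: "occ y \<noteq> {}" by auto
    hence pos: "card (occ y) > 0" by (simp add: card_gt_0_iff)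
    have "(\<Sum>c\<in>{x. x \<in> Cl \<and> sym x = y}. 1 / real (card (occ (sym c))))
        = (\<Sum>c\<in>occ y. 1 / real (card (occ y)))"
      unfolding eq by (rule sum.cong) (auto simp: occ_def sym_def)
    also have "\<dots> = 1" using pos ne by simp
    finally show "(\<Sum>c\<in>{x. x \<in> Cl \<and> sym x = y}. 1 / real (card (occ (sym c)))) = 1" .
  qed
  finally show ?thesis by simp
qed

lemma row_count: assumes j: "j<F"
  shows "6 * (\<Sum>k\<in>Fl j. 1 / real (mlt j k)) = 3 * real (card (Fl j)) + 3 * real (sg j) - real (tr j)"
proof -
  have "(\<Sum>k\<in>Fl j. 6 * (1 / real (mlt j k))) =
        (\<Sum>k\<in>Fl j. 3 + 3 * (if mlt j k = 1 then 1 else 0) - (if mlt j k = 3 then 1 else 0))"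
  proof (rule sum.cong[OF refl])
    fix k assume k: "k \<in> Fl j"
    have "mlt j k = 1 \<or> mlt j k = 2 \<or> mlt j k = 3" using mlt_ge1[OF j k] mlt_le3[OF j k] by auto
    thus "6 * (1 / real (mlt j k)) = 3 + 3 * (if mlt j k = 1 then 1 else 0) - (if mlt j k = 3 then 1 else 0)"
      by auto
  qed
  also have "\<dots> = (\<Sum>k\<in>Fl j. 3) + 3 * (\<Sum>k\<in>Fl j. (if mlt j k = 1 then 1 else 0)) - (\<Sum>k\<in>Fl j. (if mlt j k = 3 then 1 else 0::real))"
    by (simp add: sum.distrib sum_subtractf sum_distrib_left)
  also have "(\<Sum>k\<in>Fl j. (if mlt j k = 1 then 1 else 0::real)) = real (sg j)"
    unfolding sg_def by (simp add: sum.If_cases Int_def)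
  also have "(\<Sum>k\<in>Fl j. (if mlt j k = 3 then 1 else 0::real)) = real (tr j)"
    unfolding tr_def by (simp add: sum.If_cases Int_def)
  finally show ?thesis by (simp add: sum_distrib_left)
qed

lemma key_count: "6 * real (card (sym ` Cl)) = (\<Sum>j<F. 3 * real (card (Fl j)) + 3 * real (sg j) - real (tr j))"
proof -
  have "(\<Sum>c\<in>Cl. 1 / real (card (occ (sym c)))) = (\<Sum>(j,k)\<in>Cl. 1 / real (mlt j k))"
    unfolding mlt_def sym_def by (simp add: case_prod_beta)
  also have "\<dots> = (\<Sum>j<F. \<Sum>k\<in>Fl j. 1 / real (mlt j k))"
    unfolding Cl_def by (rule sum.Sigma[symmetric]) auto
  finally have "(\<Sum>c\<in>Cl. 1 / real (card (occ (sym c)))) = (\<Sum>j<F. \<Sum>k\<in>Fl j. 1 / real (mlt j k))" .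
  hence "6 * real (card (sym ` Cl)) = (\<Sum>j<F. 6 * (\<Sum>k\<in>Fl j. 1 / real (mlt j k)))"
    using card_img by (simp add: sum_distrib_left)
  also have "\<dots> = (\<Sum>j<F. 3 * real (card (Fl j)) + 3 * real (sg j) - real (tr j))"
    by (rule sum.cong[OF refl]) (simp add: row_count)
  finally show ?thesis .
qed

lemma sumD: "(\<Sum>j<F. D j) = 2 * F"
proof -
  have "(\<Sum>j<F. D j) = card (Sigma {..<F} X)" unfolding D_def by simp
  also have "Sigma {..<F} X = prod.swap ` (Sigma {..<F} E)"
    unfolding X_def E_def by auto
  also have "card \<dots> = card (Sigma {..<F} E)" by (rule card_image) simp
  also have "\<dots> = (\<Sum>k<F. card (E k))" by simp
  also have "\<dots> = (\<Sum>k<F. 2)" by (rule sum.cong) (auto simp: cardE)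
  finally show ?thesis by simp
qed

lemma cardFl: "card (Fl j) = F - D j"
proof -
  have "Fl j = {..<F} - X j" unfolding Fl_def X_def by auto
  moreover have "X j \<subseteq> {..<F}" unfolding X_def by auto
  ultimately show ?thesis unfolding D_def by (simp add: card_Diff_subset)
qed

lemma DleF: "D j \<le> F"
proof -
  have "X j \<subseteq> {..<F}" unfolding X_def by auto
  thus ?thesis unfolding D_def using card_mono[of "{..<F}" "X j"] by simp
qed

lemma symS: "sym ` Cl \<subseteq> S"
  unfolding Cl_def Fl_def sym_def using inS by auto


lemma partner: assumes j: "j<F" and k: "k \<in> Fl j" and m: "mlt j k \<noteq> 1"
  obtains w k' where "w<F" "k'<F" "r w k' = r j k" "w \<noteq> j" "k' \<noteq> k" "r j k' = None" "r w k = None"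
proof -
  from k obtain t where t: "r j k = Some t" and kF: "k<F" by (rule Fl_obt)
  have jk: "(j,k) \<in> occ t" using occI[OF j kF t] .
  have "card (occ t) \<ge> 1" using mlt_ge1[OF j k] t unfolding mlt_def by simp
  hence "card (occ t) \<ge> 2" using m t unfolding mlt_def by simp
  moreover have "card (occ t) = Suc (card (occ t - {(j,k)}))" by (rule card.remove[OF finocc jk])
  ultimately have "card (occ t - {(j,k)}) \<noteq> 0" by linarith
  hence "occ t - {(j,k)} \<noteq> {}" by (metis card.empty)
  then obtain w k' where wk: "(w,k') \<in> occ t" "(w,k') \<noteq> (j,k)" by auto
  hence wF: "w<F" "k'<F" "r w k' = Some t" unfolding occ_def by auto
  have "w \<noteq> j" using rowu[OF j kF wF(2) t] wF wk(2) by auto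
  moreover have "k' \<noteq> k" using colu[OF kF j wF(1) t] wF wk(2) by auto
  moreover have "r j k' = None" "r w k = None" using c4[OF j wF(1) kF wF(2) _ t wF(3)] wk(2) by auto
  ultimately show ?thesis using that wF t by auto
qed

lemma Wbound: assumes j: "j<F" "j \<notin> W" and W: "W \<subseteq> {..<F}"
  shows "ec W \<le> sg j + (\<Sum>k\<in>X j. card (W - E k))"
proof -
  define A where "A = {k. k<F \<and> E k \<subseteq> W}"
  define A1 where "A1 = {k\<in>A. mlt j k = 1}"
  define A2 where "A2 = {k\<in>A. mlt j k \<noteq> 1}"
  define T where "T = Sigma (X j) (\<lambda>k'. W - E k')"
  have finW: "finite W" using W finite_subset by blast
  have AFl: "A \<subseteq> Fl j"
  proof
    fix k assume "k \<in> A"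
    hence "k<F" "E k \<subseteq> W" unfolding A_def by auto
    moreover have "r j k \<noteq> None"
    proof
      assume "r j k = None"
      hence "j \<in> E k" unfolding E_def using j by auto
      thus False using \<open>E k \<subseteq> W\<close> j by auto
    qed
    ultimately show "k \<in> Fl j" unfolding Fl_def by auto
  qed
  have "A = A1 \<union> A2" unfolding A1_def A2_def by auto
  hence "card A \<le> card A1 + card A2" by (simp add: card_Un_le)
  moreover have "card A1 \<le> sg j" unfolding sg_def A1_def using AFl by (intro card_mono) auto
  moreover have "card A2 \<le> card T"
  proof -
    define f where "f k = (SOME p. p \<in> T \<and> r (snd p) (fst p) = r j k)" for k
    have fp: "f k \<in> T \<and> r (snd (f k)) (fst (f k)) = r j k" if kA: "k \<in> A2" for k
    proof -
      have kFl: "k \<in> Fl j" and m: "mlt j k \<noteq> 1" and EW: "E k \<subseteq> W" using kA AFl unfolding A2_def A_def by auto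
      obtain w k' where P: "w<F" "k'<F" "r w k' = r j k" "w \<noteq> j" "k' \<noteq> k" "r j k' = None" "r w k = None"
        using partner[OF j(1) kFl m] .
      have kF: "k<F" using kFl unfolding Fl_def by auto
      have "(k',w) \<in> T"
      proof -
        have "k' \<in> X j" unfolding X_def using P by auto
        moreover have "w \<in> E k" unfolding E_def using P by auto
        hence "w \<in> W" using EW by auto
        moreover have "w \<notin> E k'" unfolding E_def using P kFl unfolding Fl_def by auto
        ultimately show ?thesis unfolding T_def by auto
      qed
      hence "\<exists>p. p \<in> T \<and> r (snd p) (fst p) = r j k" using P by (intro exI[of _ "(k',w)"]) auto
      thus ?thesis unfolding f_def by (rule someI_ex)
    qed
    have "inj_on f A2"
    proof (rule inj_onI)
      fix k1 k2 assume k1: "k1 \<in> A2" and k2: "k2 \<in> A2" and e: "f k1 = f k2"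
      have "r j k1 = r (snd (f k1)) (fst (f k1))" using fp[OF k1] by simp
      also have "\<dots> = r j k2" using fp[OF k2] e by simp
      finally have eq: "r j k1 = r j k2" .
      from k1 AFl have "k1 \<in> Fl j" unfolding A2_def by auto
      then obtain t where t: "r j k1 = Some t" "k1<F" by (rule Fl_obt)
      from k2 AFl have "k2<F" unfolding A2_def Fl_def by auto
      show "k1 = k2" using rowu[OF j(1) t(2) \<open>k2<F\<close> t(1)] eq t(1) by simp
    qed
    moreover have "f ` A2 \<subseteq> T" using fp by auto
    moreover have "finite T" unfolding T_def using finW by auto
    ultimately show ?thesis by (rule card_inj_on_le)
  qed
  moreover have "card T = (\<Sum>k\<in>X j. card (W - E k))" unfolding T_def using finW by simp
  ultimately show ?thesis unfolding ec_def A_def by linarith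
qed

lemma tri_cells: assumes v: "v<F" and k: "k \<in> Fl v" and m: "mlt v k = 3"
  obtains a y b z where "a<F" "y<F" "b<F" "z<F" "r a y = r v k" "r b z = r v k"
    "a \<noteq> v" "b \<noteq> v" "a \<noteq> b" "y \<noteq> k" "z \<noteq> k" "y \<noteq> z"
    "r v y = None" "r a k = None" "r v z = None" "r b k = None" "r a z = None" "r b y = None"
    "occ (the (r v k)) = {(v,k),(a,y),(b,z)}"
proof -
  from k obtain t where t: "r v k = Some t" and kF: "k<F" by (rule Fl_obt)
  have vk: "(v,k) \<in> occ t" using occI[OF v kF t] .
  have "card (occ t) = 3" using m t unfolding mlt_def by simp
  moreover have "card (occ t) = Suc (card (occ t - {(v,k)}))" by (rule card.remove[OF finocc vk])
  ultimately have "card (occ t - {(v,k)}) = 2" by linarith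
  then obtain p q where pq: "occ t - {(v,k)} = {p,q}" "p \<noteq> q" by (auto simp: card_2_iff)
  obtain a y where p: "p = (a,y)" by (cases p)
  obtain b z where q: "q = (b,z)" by (cases q)
  have ay: "(a,y) \<in> occ t" "(a,y) \<noteq> (v,k)" using pq p by auto
  have bz: "(b,z) \<in> occ t" "(b,z) \<noteq> (v,k)" using pq q by auto
  have A: "a<F" "y<F" "r a y = Some t" using ay unfolding occ_def by auto
  have B: "b<F" "z<F" "r b z = Some t" using bz unfolding occ_def by auto
  have f1: "a \<noteq> v"
  proof
    assume "a = v" thus False using rowu[OF v kF A(2) t] A(3) ay(2) by simp
  qed
  have f2: "b \<noteq> v"
  proof
    assume "b = v" thus False using rowu[OF v kF B(2) t] B(3) bz(2) by simp
  qed
  have f3: "a \<noteq> b"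
  proof
    assume ab: "a = b"
    hence "y = z" using rowu[OF A(1) A(2) B(2) A(3)] B(3) by simp
    thus False using ab pq(2) p q by simp
  qed
  have f4: "y \<noteq> k"
  proof
    assume "y = k" thus False using colu[OF kF v A(1) t] A(3) ay(2) by simp
  qed
  have f5: "z \<noteq> k"
  proof
    assume "z = k" thus False using colu[OF kF v B(1) t] B(3) bz(2) by simp
  qed
  have f6: "y \<noteq> z"
  proof
    assume yz: "y = z"
    hence "a = b" using colu[OF A(2) A(1) B(1) A(3)] B(3) by simp
    thus False using yz pq(2) p q by simp
  qed
  have f7: "r v y = None" "r a k = None" using c4[OF v A(1) kF A(2) _ t A(3)] ay(2) by auto
  have f8: "r v z = None" "r b k = None" using c4[OF v B(1) kF B(2) _ t B(3)] bz(2) by auto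
  have f9: "r a z = None" "r b y = None" using c4[OF A(1) B(1) A(2) B(2) _ A(3) B(3)] pq(2) p q by auto
  have f10: "occ t = {(v,k),(a,y),(b,z)}" using pq p q vk by blast
  have e1: "r a y = r v k" and e2: "r b z = r v k" using A(3) B(3) t by simp_all
  have e3: "occ (the (r v k)) = {(v,k),(a,y),(b,z)}" using f10 t by simp
  show ?thesis by (rule that[OF A(1) A(2) B(1) B(2) e1 e2 f1 f2 f3 f4 f5 f6 f7 f8 f9 e3])
qed

lemma cardX_Nb: assumes v: "v<F" shows "card (Nb v) \<le> D v"
proof -
  have "Nb v \<subseteq> (\<Union>k\<in>X v. E k - {v})" unfolding Nb_def X_def E_def by auto
  hence "card (Nb v) \<le> card (\<Union>k\<in>X v. E k - {v})" by (intro card_mono) auto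
  also have "\<dots> \<le> (\<Sum>k\<in>X v. card (E k - {v}))" by (rule card_UN_le) simp
  also have "\<dots> = (\<Sum>k\<in>X v. 1)"
  proof (rule sum.cong[OF refl])
    fix k assume "k \<in> X v"
    hence "k<F" "v \<in> E k" unfolding X_def E_def using v by auto
    thus "card (E k - {v}) = 1" using cardE by simp
  qed
  finally show ?thesis unfolding D_def by simp
qed

lemma tr_ec: assumes v: "v<F" shows "tr v \<le> ec (Nb v)"
proof -
  have "{k \<in> Fl v. mlt v k = 3} \<subseteq> {k. k<F \<and> E k \<subseteq> Nb v}"
  proof
    fix k assume "k \<in> {k \<in> Fl v. mlt v k = 3}"
    hence k: "k \<in> Fl v" "mlt v k = 3" by auto
    obtain a y b z where T: "a<F" "y<F" "b<F" "z<F" "r a y = r v k" "r b z = r v k"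
    "a \<noteq> v" "b \<noteq> v" "a \<noteq> b" "y \<noteq> k" "z \<noteq> k" "y \<noteq> z"
    "r v y = None" "r a k = None" "r v z = None" "r b k = None" "r a z = None" "r b y = None"
      by (rule tri_cells[OF v k])
    have kF: "k<F" using k unfolding Fl_def by auto
    have sub: "{a,b} \<subseteq> E k" unfolding E_def using T by auto
    have "{a,b} = E k" by (rule card_subset_eq) (use sub T cardE[OF kF] in auto)
    moreover have "a \<in> Nb v" unfolding Nb_def using T by auto
    moreover have "b \<in> Nb v" unfolding Nb_def using T by auto
    ultimately show "k \<in> {k. k<F \<and> E k \<subseteq> Nb v}" using kF by auto
  qed
  thus ?thesis unfolding tr_def ec_def by (intro card_mono) auto
qed

lemma tr_le: "tr v \<le> card (Fl v)" unfolding tr_def by (intro card_mono) auto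

lemma tr_choose: assumes v: "v<F" shows "tr v \<le> D v choose 2"
proof -
  define TR where "TR = {k \<in> Fl v. mlt v k = 3}"
  define g where "g k = (snd ` occ (the (r v k))) - {k}" for k
  have gk: "\<exists>a y b z. g k = {y,z} \<and> y \<noteq> z \<and> (a,y) \<in> occ (the (r v k)) \<and> (b,z) \<in> occ (the (r v k))
      \<and> a \<noteq> v \<and> b \<noteq> v \<and> r v y = None \<and> r v z = None \<and> y<F \<and> z<F \<and> y \<noteq> k \<and> z \<noteq> k" if kT: "k \<in> TR" for k
  proof -
    have k: "k \<in> Fl v" "mlt v k = 3" using kT unfolding TR_def by auto
    obtain a y b z where T: "a<F" "y<F" "b<F" "z<F" "r a y = r v k" "r b z = r v k"
    "a \<noteq> v" "b \<noteq> v" "a \<noteq> b" "y \<noteq> k" "z \<noteq> k" "y \<noteq> z"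
    "r v y = None" "r a k = None" "r v z = None" "r b k = None" "r a z = None" "r b y = None"
    "occ (the (r v k)) = {(v,k),(a,y),(b,z)}"
      by (rule tri_cells[OF v k])
    have gy: "g k = {y,z}" unfolding g_def T(19) using T by auto
    have m1: "(a,y) \<in> occ (the (r v k))" using T(19) by simp
    have m2: "(b,z) \<in> occ (the (r v k))" using T(19) by simp
    show ?thesis using gy m1 m2 T(7,8,12,13,15,2,4,10,11) by blast
  qed
  have "g ` TR \<subseteq> {B. B \<subseteq> X v \<and> card B = 2}"
  proof
    fix B assume "B \<in> g ` TR"
    then obtain k where "k \<in> TR" "B = g k" by auto
    with gk show "B \<in> {B. B \<subseteq> X v \<and> card B = 2}" unfolding X_def by fastforce
  qed
  moreover have "inj_on g TR"
  proof (rule inj_onI)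
    fix k1 k2 assume k1: "k1 \<in> TR" and k2: "k2 \<in> TR" and e: "g k1 = g k2"
    from k1 obtain t1 where t1: "r v k1 = Some t1" and k1F: "k1<F" unfolding TR_def using Fl_obt by blast
    from k2 obtain t2 where t2: "r v k2 = Some t2" and k2F: "k2<F" unfolding TR_def using Fl_obt by blast
    obtain a y b z where G: "g k1 = {y,z}" "y \<noteq> z" "(a,y) \<in> occ t1" "(b,z) \<in> occ t1" "a \<noteq> v" "b \<noteq> v"
       "r v y = None" "r v z = None" "y<F" "z<F" "y \<noteq> k1" "z \<noteq> k1"
      using gk[OF k1] t1 by auto
    have "y \<in> g k2" "z \<in> g k2" using G e by auto
    then obtain a2 b2 where H: "(a2,y) \<in> occ t2" "(b2,z) \<in> occ t2" "y \<noteq> k2" "z \<noteq> k2"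
      unfolding g_def using t2 by auto
    have a2v: "a2 \<noteq> v"
    proof
      assume "a2 = v"
      hence "r v y = Some t2" using H unfolding occ_def by auto
      thus False using G by auto
    qed
    have Ra: "a<F" "r a y = Some t1" using G unfolding occ_def by auto
    have Rb: "b<F" "r b z = Some t1" using G unfolding occ_def by auto
    have Ra2: "a2<F" "r a2 y = Some t2" using H unfolding occ_def by auto
    have Rb2: "b2<F" "r b2 z = Some t2" using H unfolding occ_def by auto
    have n1: "r a z = None" using c4[OF Ra(1) Rb(1) G(9) G(10) _ Ra(2) Rb(2)] G(2) by auto
    have n2: "r a2 z = None" using c4[OF Ra2(1) Rb2(1) G(9) G(10) _ Ra2(2) Rb2(2)] G(2) by auto
    have "a = a2"
    proof (rule ccontr)
      assume "a \<noteq> a2"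
      have "{v,a,a2} \<subseteq> E z" unfolding E_def using G n1 n2 Ra Ra2 v by auto
      moreover have "card {v,a,a2} = 3" using \<open>a \<noteq> a2\<close> G(5) a2v by auto
      ultimately have "3 \<le> card (E z)" by (metis card_mono finE)
      thus False using cardE[OF G(10)] by simp
    qed
    hence "t1 = t2" using Ra(2) Ra2(2) by simp
    thus "k1 = k2" using rowu[OF v k1F k2F t1] t2 by simp
  qed
  ultimately have "card TR \<le> card {B. B \<subseteq> X v \<and> card B = 2}"
    by (intro card_inj_on_le) auto
  also have "\<dots> = D v choose 2" unfolding D_def by (rule n_subsets) simp
  finally show ?thesis unfolding tr_def TR_def .
qed


lemma tr_small2: assumes v: "v<F" and d: "D v \<le> 2" shows "tr v \<le> 1"
proof -
  have "D v choose 2 \<le> 1" using d by (cases "D v"; cases "D v - 1"; simp add: choose_two)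
  moreover have "tr v \<le> D v choose 2" using tr_choose[OF v] .
  ultimately show ?thesis by linarith
qed

lemma tr_small1: assumes v: "v<F" and d: "D v \<le> 1" shows "tr v = 0"
proof -
  have "D v = 0 \<or> D v = 1" using d by auto
  hence "D v choose 2 = 0" by (auto simp: choose_two)
  moreover have "tr v \<le> D v choose 2" using tr_choose[OF v] .
  ultimately show ?thesis by linarith
qed

lemma tr_34: assumes v: "v<F" and d: "3 \<le> D v" "D v \<le> 4" shows "tr v + 7 \<le> 4 * D v"
proof -
  have c3: "(3::nat) choose 2 = 3" by (simp add: choose_two)
  have c4: "(4::nat) choose 2 = 6" by (simp add: choose_two)
  have "D v = 3 \<or> D v = 4" using d by auto
  moreover have "tr v \<le> D v choose 2" using tr_choose[OF v] .
  ultimately show ?thesis using c3 c4 by (auto simp del: binomial_eq_0_iff)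
qed

lemma sg_base: assumes v: "v<F" shows "F - D v \<le> sg v + D v * (F - 2)"
proof -
  define W where "W = {..<F} - {v}"
  have W: "W \<subseteq> {..<F}" "v \<notin> W" unfolding W_def by auto
  have "ec W = card (Fl v)"
  proof -
    have "{k. k<F \<and> E k \<subseteq> W} = Fl v" unfolding W_def E_def Fl_def using v by auto
    thus ?thesis unfolding ec_def by simp
  qed
  moreover have "(\<Sum>k\<in>X v. card (W - E k)) = (\<Sum>k\<in>X v. F - 2)"
  proof (rule sum.cong[OF refl])
    fix k assume k: "k \<in> X v"
    hence kF: "k<F" and vE: "v \<in> E k" unfolding X_def E_def using v by auto
    have "W - E k = {..<F} - E k" unfolding W_def using vE by auto
    moreover have "E k \<subseteq> {..<F}" unfolding E_def by auto
    ultimately show "card (W - E k) = F - 2" using cardE[OF kF] by (simp add: card_Diff_subset)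
  qed
  ultimately show ?thesis using Wbound[OF v W(2) W(1)] cardFl[of v] unfolding D_def by simp
qed

lemma NbF: "Nb v \<subseteq> {..<F}" unfolding Nb_def by auto

lemma Wbound2: assumes j: "j<F" "j \<notin> W" and W: "W \<subseteq> {..<F}"
  shows "ec W \<le> sg j + D j * card W"
proof -
  have "(\<Sum>k\<in>X j. card (W - E k)) \<le> (\<Sum>k\<in>X j. card W)"
    by (rule sum_mono) (use W finite_subset in \<open>auto intro: card_mono\<close>)
  thus ?thesis using Wbound[OF j W] unfolding D_def by simp
qed

lemma main_ineq: assumes F3: "3 \<le> F" shows "(\<Sum>j<F. int (tr j) - 3 * int (sg j)) \<le> int F"
proof -
  define Y where "Y v = int (tr v) + 7 - 4 * int (D v)" for v
  define tm where "tm v = int (tr v) - 3 * int (sg v) + 7 - 4 * int (D v)" for v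
  define P where "P = {v. v<F \<and> 3 \<le> D v \<and> Y v > 0}"
  have sD: "(\<Sum>v<F. int (D v)) = 2 * int F" using sumD by (metis of_nat_mult of_nat_numeral of_nat_sum)
  have sumtm: "(\<Sum>v<F. tm v) = (\<Sum>j<F. int (tr j) - 3 * int (sg j)) - int F"
  proof -
    have "(\<Sum>v<F. tm v) = (\<Sum>j<F. int (tr j) - 3 * int (sg j)) + (\<Sum>v<F. 7) - 4 * (\<Sum>v<F. int (D v))"
      unfolding tm_def by (simp add: sum.distrib sum_subtractf sum_distrib_left)
    thus ?thesis using sD by simp
  qed
  have nonP: "tm v \<le> 0" if v: "v<F" "v \<notin> P" for v
  proof -
    consider "D v = 0" | "D v = 1" | "D v = 2" | "3 \<le> D v" by linarith
    thus ?thesis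
    proof cases
      case 1
      hence "tr v = 0" using tr_small1[OF v(1)] by simp
      moreover have "F \<le> sg v" using sg_base[OF v(1)] 1 by simp
      ultimately show ?thesis unfolding tm_def using 1 F3 by simp
    next
      case 2
      hence "tr v = 0" using tr_small1[OF v(1)] by simp
      moreover have "1 \<le> sg v" using sg_base[OF v(1)] 2 F3 by simp
      ultimately show ?thesis unfolding tm_def using 2 by simp
    next
      case 3
      hence "tr v \<le> 1" using tr_small2[OF v(1)] by simp
      thus ?thesis unfolding tm_def using 3 by simp
    next
      case 4
      hence "Y v \<le> 0" using v unfolding P_def by auto
      thus ?thesis unfolding tm_def Y_def by simp
    qed
  qed
  have inP: "tm v \<le> Y v" if "v \<in> P" for v unfolding tm_def Y_def by simp
  have "(\<Sum>v<F. tm v) \<le> 0"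
  proof (cases "P = {}")
    case True
    hence "\<And>v. v\<in>{..<F} \<Longrightarrow> tm v \<le> 0" using nonP by auto
    thus ?thesis by (rule sum_nonpos)
  next
    case False
    have finP: "finite P" unfolding P_def by auto
    hence "Max (Y ` P) \<in> Y ` P" using False by (intro Max_in) auto
    then obtain w where wP: "w \<in> P" and wmax: "Y w = Max (Y ` P)" by auto
    have ymax: "Y v \<le> Y w" if "v \<in> P" for v using that finP wmax by simp
    have wF: "w<F" and d3: "3 \<le> D w" and yp: "Y w > 0" using wP unfolding P_def by auto
    have d5: "5 \<le> D w"
    proof (rule ccontr)
      assume "\<not> 5 \<le> D w"
      hence "tr w + 7 \<le> 4 * D w" using tr_34[OF wF d3] by simp
      thus False using yp unfolding Y_def by simp
    qed
    have tF: "tr w \<le> F - D w" using tr_le[of w] cardFl[of w] by simp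
    have DwF: "D w \<le> F" by (rule DleF)
    define W where "W = Nb w"
    have WF: "W \<subseteq> {..<F}" unfolding W_def by (rule NbF)
    have tW: "tr w \<le> ec W" unfolding W_def by (rule tr_ec[OF wF])
    have cW: "card W \<le> D w" unfolding W_def by (rule cardX_Nb[OF wF])
    define L where "L = {v. v<F \<and> D v \<le> 2}"
    define Lo where "Lo = L - W"
    have lo: "tm v \<le> -3 * Y w" if vLo: "v \<in> Lo" for v
    proof -
      have v: "v<F" "D v \<le> 2" "v \<notin> W" using vLo unfolding Lo_def L_def by auto
      have "ec W \<le> sg v + D v * card W" by (rule Wbound2[OF v(1) v(3) WF])
      hence key: "tr w \<le> sg v + D v * D w" using tW cW
        by (meson add_left_mono le_trans mult_le_mono2)
      consider "D v = 0" | "D v = 1" | "D v = 2" using v(2) by linarith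
      thus ?thesis
      proof cases
        case 1
        hence "tr v = 0" using tr_small1[OF v(1)] by simp
        thus ?thesis unfolding tm_def Y_def using 1 key d5 by simp
      next
        case 2
        hence "tr v = 0" using tr_small1[OF v(1)] by simp
        thus ?thesis unfolding tm_def Y_def using 2 key d5 by simp
      next
        case 3
        hence "tr v \<le> 1" using tr_small2[OF v(1)] by simp
        thus ?thesis unfolding tm_def Y_def using 3 key d5 by simp
      qed
    qed
    have PL: "P \<inter> Lo = {}" unfolding P_def Lo_def L_def by auto
    define g where "g v = (if v \<in> P then Y w else if v \<in> Lo then -3 * Y w else 0)" for v
    have "(\<Sum>v<F. tm v) \<le> (\<Sum>v<F. g v)"
    proof (rule sum_mono)
      fix v assume "v \<in> {..<F}"
      hence vF: "v<F" by simp
      show "tm v \<le> g v"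
      proof (cases "v \<in> P")
        case True
        have "tm v \<le> Y w" using inP[OF True] ymax[OF True] by linarith
        thus ?thesis unfolding g_def using True by simp
      next
        case False
        show ?thesis
        proof (cases "v \<in> Lo")
          case True thus ?thesis unfolding g_def using lo False by simp
        next
          case False2: False
          thus ?thesis unfolding g_def using nonP[OF vF False] False by simp
        qed
      qed
    qed
    also have "(\<Sum>v<F. g v) = Y w * int (card P) - 3 * Y w * int (card Lo)"
    proof -
      have PF: "P \<subseteq> {..<F}" and LoF: "Lo \<subseteq> {..<F}" unfolding P_def Lo_def L_def by auto
      have "(\<Sum>v<F. g v) = (\<Sum>v<F. (if v \<in> P then Y w else 0)) + (\<Sum>v<F. (if v \<in> Lo then -3 * Y w else 0))"
        unfolding g_def using PL by (subst sum.distrib[symmetric]) (rule sum.cong; auto)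
      also have "(\<Sum>v<F. (if v \<in> P then Y w else 0)) = Y w * int (card P)"
        using PF by (simp add: sum.If_cases Int_absorb1 Int_absorb2)
      also have "(\<Sum>v<F. (if v \<in> Lo then -3 * Y w else 0)) = - 3 * Y w * int (card Lo)"
        using LoF by (simp add: sum.If_cases Int_absorb1 Int_absorb2)
      finally show ?thesis by simp
    qed
    also have "\<dots> \<le> 0"
    proof -
      have LF: "L \<subseteq> {..<F}" unfolding L_def by auto
      have PF: "P \<subseteq> {..<F}" unfolding P_def by auto
      have hcount: "3 * int F + 2 * int (card P) - 3 * int (card L) \<le> 2 * int F"
      proof -
        have "(\<Sum>v<F. (3 + 2 * (if v \<in> P then 1 else 0) - 3 * (if v \<in> L then 1 else 0) :: int)) \<le> (\<Sum>v<F. int (D v))"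
        proof (rule sum_mono)
          fix v assume "v \<in> {..<F}"
          show "(3 + 2 * (if v \<in> P then 1 else 0) - 3 * (if v \<in> L then 1 else 0) :: int) \<le> int (D v)"
          proof (cases "v \<in> P")
            case True
            hence "5 \<le> D v"
            proof -
              have "3 \<le> D v" "Y v > 0" "v<F" using True unfolding P_def by auto
              thus ?thesis using tr_34[of v] unfolding Y_def by (cases "5 \<le> D v") auto
            qed
            moreover have "v \<notin> L" using True unfolding P_def L_def by auto
            ultimately show ?thesis using True by simp
          next
            case False
            thus ?thesis using \<open>v \<in> {..<F}\<close> unfolding L_def by auto
          qed
        qed
        also have "\<dots> = 2 * int F" by (rule sD)
        finally have le: "(\<Sum>v<F. (3 + 2 * (if v \<in> P then 1 else 0) - 3 * (if v \<in> L then 1 else 0) :: int)) \<le> 2 * int F" .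
        have "(\<Sum>v<F. (3 + 2 * (if v \<in> P then 1 else 0) - 3 * (if v \<in> L then 1 else 0) :: int))
             = 3 * int F + 2 * int (card P) - 3 * int (card L)"
          using PF LF by (simp add: sum.distrib sum_subtractf sum_distrib_left[symmetric] sum.If_cases Int_absorb1 Int_absorb2)
        thus ?thesis using le by simp
      qed
      have "card L - card W \<le> card Lo" unfolding Lo_def
        by (rule diff_card_le_card_Diff) (use WF finite_subset in blast)
      hence cLo: "int (card L) - int (card W) \<le> int (card Lo)" by linarith
      have "int (tr w) + 7 - 4 * int (D w) > 0" using yp unfolding Y_def .
      hence "5 * int (D w) \<le> int F + 6" using tF DwF by linarith
      moreover have "1 \<le> card P" using False finP by (simp add: Suc_le_eq card_gt_0_iff)
      ultimately have "int (card P) \<le> 3 * int (card Lo)" using hcount cLo cW d5 by linarith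
      hence "0 \<le> 3 * int (card Lo) - int (card P)" by simp
      hence "0 \<le> Y w * (3 * int (card Lo) - int (card P))" using yp by simp
      thus ?thesis by (simp add: algebra_simps)
    qed
    finally show ?thesis .
  qed
  thus ?thesis using sumtm by simp
qed

lemma sumFl: "(\<Sum>j<F. real (card (Fl j))) = real F * real F - 2 * real F"
proof -
  have "(\<Sum>j<F. real (card (Fl j))) = (\<Sum>j<F. real F - real (D j))"
    by (rule sum.cong) (auto simp: cardFl DleF of_nat_diff)
  also have "\<dots> = real F * real F - real (\<Sum>j<F. D j)" by (simp add: sum_subtractf)
  finally show ?thesis using sumD by simp
qed

lemma upper: assumes sg0: "\<And>j. j<F \<Longrightarrow> sg j = 0" and T: "T \<le> (\<Sum>j<F. tr j)"
  shows "6 * real (card (sym ` Cl)) \<le> 3 * (real F * real F - 2 * real F) - real T"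
proof -
  have "6 * real (card (sym ` Cl)) = 3 * (\<Sum>j<F. real (card (Fl j))) - (\<Sum>j<F. real (tr j))"
    using key_count sg0 by (simp add: sum.distrib sum_subtractf sum_distrib_left)
  moreover have "real T \<le> (\<Sum>j<F. real (tr j))" using T by (metis of_nat_le_iff of_nat_sum)
  ultimately have "6 * real (card (sym ` Cl)) \<le> 3 * (\<Sum>j<F. real (card (Fl j))) - real T" by linarith
  thus ?thesis unfolding sumFl .
qed

lemma lower: assumes F3: "3 \<le> F" shows "int F * (3 * int F - 7) \<le> 6 * int (card S)"
proof -
  have sF: "(\<Sum>j<F. real (card (Fl j))) = real F * real F - 2 * real F"
  proof -
    have "(\<Sum>j<F. real (card (Fl j))) = (\<Sum>j<F. real F - real (D j))"
      by (rule sum.cong) (auto simp: cardFl DleF of_nat_diff)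
    also have "\<dots> = real F * real F - real (\<Sum>j<F. D j)" by (simp add: sum_subtractf)
    finally show ?thesis using sumD by simp
  qed
  have mi: "(\<Sum>j<F. real (tr j) - 3 * real (sg j)) \<le> real F"
  proof -
    have "real_of_int (\<Sum>j<F. int (tr j) - 3 * int (sg j)) \<le> real_of_int (int F)"
      using main_ineq[OF F3] by (simp only: of_int_le_iff)
    thus ?thesis by simp
  qed
  define A where "A = (\<Sum>j<F. real (card (Fl j)))"
  define B where "B = (\<Sum>j<F. real (tr j) - 3 * real (sg j))"
  have "6 * real (card (sym ` Cl)) = 3 * A - B"
    using key_count unfolding A_def B_def by (simp add: sum.distrib sum_subtractf sum_distrib_left algebra_simps)
  moreover have "A = real F * real F - 2 * real F" using sF unfolding A_def .
  moreover have "B \<le> real F" using mi unfolding B_def .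
  ultimately have "6 * real (card (sym ` Cl)) \<ge> 3 * (real F * real F - 2 * real F) - real F"
  proof -
    assume h1: "6 * real (card (sym ` Cl)) = 3 * A - B" and h2: "A = real F * real F - 2 * real F" and h3: "B \<le> real F"
    have "3 * A - B \<ge> 3 * A - real F" using h3 by linarith
    thus ?thesis using h1 h2 by simp
  qed
  moreover have "card (sym ` Cl) \<le> card S" using symS finS by (rule card_mono[rotated])
  ultimately have "3 * (real F * real F - 2 * real F) - real F \<le> 6 * real (card S)" by linarith
  hence "real_of_int (int F * (3 * int F - 7)) \<le> real_of_int (6 * int (card S))" by (simp add: algebra_simps)
  thus ?thesis by (simp only: of_int_le_iff)
qed

end



definition tri :: "nat \<Rightarrow> nat" where "tri F = (if F mod 3 = 1 then F div 3 - 1 else F div 3)"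
definition sc :: "nat \<Rightarrow> nat \<Rightarrow> nat" where
  "sc F v = (if v < 3 * tri F then (if v mod 3 = 2 then v - 2 else v + 1)
             else (if (v - 3 * tri F) mod 2 = 0 then v + 1 else v - 1))"

lemma tri_props: assumes "3 \<le> F" shows "3 * tri F \<le> F" "(F - 3 * tri F) mod 2 = 0" "F - 3 * tri F \<le> 4"
  using assms unfolding tri_def by presburger+

lemma p1: "(F - n) mod 2 = 0 \<Longrightarrow> n \<le> (v::nat) \<Longrightarrow> v < F \<Longrightarrow> (v - n) mod 2 = 0 \<Longrightarrow> v + 1 < F" by presburger
lemma p2: "n \<le> (v::nat) \<Longrightarrow> (v - n) mod 2 = 0 \<Longrightarrow> (v + 1 - n) mod 2 \<noteq> 0" by presburger
lemma p3: "n \<le> (v::nat) \<Longrightarrow> (v - n) mod 2 \<noteq> 0 \<Longrightarrow> n \<le> v - 1 \<and> (v - 1 - n) mod 2 = 0" by presburger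

lemma sc_low: "v < 3 * tri F \<Longrightarrow> sc F v = (if v mod 3 = 2 then v - 2 else v + 1)"
  unfolding sc_def by simp
lemma sc_high: "3 * tri F \<le> v \<Longrightarrow> sc F v = (if (v - 3 * tri F) mod 2 = 0 then v + 1 else v - 1)"
  unfolding sc_def by simp

lemma m3cases: "(v::nat) mod 3 = 0 \<or> v mod 3 = 1 \<or> v mod 3 = 2" by presburger

lemma sc_form: assumes q: "q < tri F" and a: "a < 3"
  shows "sc F (3*q + a) = 3*q + (if a = 2 then 0 else a + 1)"
proof -
  have "3*q + a < 3 * tri F" using q a by linarith
  moreover have "(3*q + a) mod 3 = a" using a by simp
  ultimately show ?thesis using sc_low[of "3*q+a" F] a by auto
qed

lemma sc_tri: assumes v: "v < 3 * tri F"
  shows "sc F v < 3 * tri F" "sc F v div 3 = v div 3" "sc F (sc F (sc F v)) = v" "sc F (sc F v) \<noteq> v" "sc F v \<noteq> v"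
proof -
  define q where "q = v div 3"
  define a where "a = v mod 3"
  have ev: "v = 3 * q + a" unfolding q_def a_def by simp
  have qt: "q < tri F" using v unfolding q_def by linarith
  have ca: "a = 0 \<or> a = 1 \<or> a = 2" unfolding a_def by (rule m3cases)
  have d1: "(3*q+1) div 3 = q" "(3*q+2) div 3 = q" "(3*q) div 3 = q" by presburger+
  have f0: "sc F (3*q + 0) = 3*q + 1" using sc_form[OF qt, of 0] by simp
  have f1: "sc F (3*q + 1) = 3*q + 2" using sc_form[OF qt, of 1] by simp
  have f2: "sc F (3*q + 2) = 3*q + 0" using sc_form[OF qt, of 2] by simp
  have "(sc F v < 3 * tri F \<and> sc F v div 3 = v div 3) \<and> sc F (sc F (sc F v)) = v \<and> sc F (sc F v) \<noteq> v \<and> sc F v \<noteq> v"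
    using ca
  proof (elim disjE)
    assume "a = 0" thus ?thesis using f0 f1 f2 ev qt d1 by simp
  next
    assume "a = 1" thus ?thesis using f0 f1 f2 ev qt d1 by simp
  next
    assume "a = 2" thus ?thesis using f0 f1 f2 ev qt d1 by simp
  qed
  thus "sc F v < 3 * tri F" "sc F v div 3 = v div 3" "sc F (sc F (sc F v)) = v" "sc F (sc F v) \<noteq> v" "sc F v \<noteq> v"
    by auto
qed

lemma sc_lt: assumes F3: "3 \<le> F" and v: "v < F" shows "sc F v < F"
proof (cases "v < 3 * tri F")
  case True thus ?thesis using sc_tri(1)[OF True] tri_props[OF F3] by simp
next
  case False
  have a: "3 * tri F \<le> F" "(F - 3 * tri F) mod 2 = 0" using tri_props[OF F3] by auto
  have h1: "(v - 3 * tri F) mod 2 = 0 \<Longrightarrow> v + 1 < F" using p1[OF a(2)] a v False by simp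
  have h2: "sc F v = (if (v - 3 * tri F) mod 2 = 0 then v + 1 else v - 1)" using sc_high[of F v] False by simp
  show ?thesis
  proof (cases "(v - 3 * tri F) mod 2 = 0")
    case True
    have "sc F v = v + 1" using h2 by (simp only: if_P[OF True])
    thus ?thesis using h1[OF True] by linarith
  next
    case False
    have "sc F v = v - 1" using h2 by (simp only: if_not_P[OF False])
    thus ?thesis using v by linarith
  qed
qed

lemma sc_ne: assumes F3: "3 \<le> F" and v: "v < F" shows "sc F v \<noteq> v"
proof (cases "v < 3 * tri F")
  case True thus ?thesis using sc_tri(5)[OF True] by simp
next
  case False
  have h1: "v \<ge> 1" if "(v - 3 * tri F) mod 2 \<noteq> 0" using that by (cases v) auto
  have h2: "sc F v = (if (v - 3 * tri F) mod 2 = 0 then v + 1 else v - 1)" using sc_high[of F v] False by simp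
  show ?thesis
  proof (cases "(v - 3 * tri F) mod 2 = 0")
    case True
    have "sc F v = v + 1" using h2 by (simp only: if_P[OF True])
    thus ?thesis by linarith
  next
    case False
    have "sc F v = v - 1" using h2 by (simp only: if_not_P[OF False])
    thus ?thesis using h1[OF False] by linarith
  qed
qed

lemma sc_inv2: assumes F3: "3 \<le> F" and v: "v < F" and h: "3 * tri F \<le> v" shows "sc F (sc F v) = v"
proof (cases "(v - 3 * tri F) mod 2 = 0")
  case True
  have s: "sc F v = v + 1" using sc_high[OF h] True by simp
  have h1: "3 * tri F \<le> v + 1" using h by linarith
  have n: "(v + 1 - 3 * tri F) mod 2 \<noteq> 0" using p2[OF h True] .
  have "sc F (v+1) = (if (v + 1 - 3 * tri F) mod 2 = 0 then v + 1 + 1 else v + 1 - 1)" by (rule sc_high[OF h1])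
  also have "\<dots> = v + 1 - 1" using n by (rule if_not_P)
  finally show ?thesis using s by simp
next
  case False
  have s: "sc F v = v - 1" using sc_high[OF h] False by simp
  have h2: "3 * tri F \<le> v - 1" and e2: "(v - 1 - 3 * tri F) mod 2 = 0" using p3[OF h False] by auto
  have v1: "v \<ge> 1" using False by (cases v) auto
  have "sc F (v-1) = (if (v - 1 - 3 * tri F) mod 2 = 0 then v - 1 + 1 else v - 1 - 1)" by (rule sc_high[OF h2])
  also have "\<dots> = v - 1 + 1" using e2 by (rule if_P)
  finally show ?thesis using s v1 by simp
qed

lemma sc_inj: assumes F3: "3 \<le> F" and v: "v < F" and w: "w < F" and e: "sc F v = sc F w" shows "v = w"
proof -
  have "sc F (sc F (sc F v)) = sc F (sc F (sc F w))" using e by simp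
  show ?thesis
  proof (cases "v < 3 * tri F")
    case vT: True
    show ?thesis
    proof (cases "w < 3 * tri F")
      case True
      have "v = sc F (sc F (sc F v))" using sc_tri(3)[OF vT] by simp
      also have "\<dots> = sc F (sc F (sc F w))" using e by simp
      also have "\<dots> = w" using sc_tri(3)[OF True] by simp
      finally show ?thesis .
    next
      case False
      have "sc F (sc F w) = w" by (rule sc_inv2[OF F3 w]) (use False in simp)
      hence "sc F (sc F v) = w" using e by (simp only:)
      moreover have "sc F (sc F v) < 3 * tri F" using sc_tri(1)[OF sc_tri(1)[OF vT]] .
      ultimately show ?thesis using False by simp
    qed
  next
    case vF: False
    have vv: "sc F (sc F v) = v" by (rule sc_inv2[OF F3 v]) (use vF in simp)
    show ?thesis
    proof (cases "w < 3 * tri F")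
      case True
      have "sc F (sc F w) = v" using e vv by (simp only:)
      moreover have "sc F (sc F w) < 3 * tri F" using sc_tri(1)[OF sc_tri(1)[OF True]] .
      ultimately show ?thesis using vF by simp
    next
      case False
      have ww: "sc F (sc F w) = w" by (rule sc_inv2[OF F3 w]) (use False in simp)
      have "v = sc F (sc F v)" using vv by simp
      also have "\<dots> = sc F (sc F w)" using e by simp
      also have "\<dots> = w" using ww .
      finally show ?thesis .
    qed
  qed
qed

lemma sc_blk: assumes v: "v < 3 * tri F" and w: "w < 3 * tri F" and d: "v div 3 = w div 3" and ne: "v \<noteq> w"
  shows "w = sc F v \<or> v = sc F w"
proof -
  have sv: "sc F v = (if v mod 3 = 2 then v - 2 else v + 1)" using sc_low[OF v] .
  have sw: "sc F w = (if w mod 3 = 2 then w - 2 else w + 1)" using sc_low[OF w] .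
  define q where "q = v div 3"
  define a where "a = v mod 3"
  define b where "b = w mod 3"
  have ev: "v = 3 * q + a" unfolding q_def a_def by simp
  have ew: "w = 3 * q + b" unfolding q_def b_def using d by simp
  have ca: "a = 0 \<or> a = 1 \<or> a = 2" unfolding a_def by (rule m3cases)
  have cb: "b = 0 \<or> b = 1 \<or> b = 2" unfolding b_def by (rule m3cases)
  have "w = (if a = 2 then v - 2 else v + 1) \<or> v = (if b = 2 then w - 2 else w + 1)"
    using ca cb ne unfolding ev ew by (elim disjE) simp_all
  hence "w = (if v mod 3 = 2 then v - 2 else v + 1) \<or> v = (if w mod 3 = 2 then w - 2 else w + 1)"
    unfolding a_def b_def .
  thus ?thesis using sv sw by simp
qed




definition cr :: "nat \<Rightarrow> nat \<Rightarrow> nat \<Rightarrow> nat option" where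
  "cr F j k = (if j = k \<or> j = sc F k then None else if k = sc F j then Some (F*F + j div 3)
               else Some (min j k * F + max j k))"
definition cS :: "nat \<Rightarrow> nat set" where "cS F = {t. \<exists>j<F. \<exists>k<F. cr F j k = Some t}"

lemma enc_lt: "(j::nat) < F \<Longrightarrow> k < F \<Longrightarrow> min j k * F + max j k < F * F"
proof -
  assume "j<F" "k<F"
  hence "min j k \<le> F - 1" "max j k < F" by auto
  hence "min j k * F + max j k < (F - 1) * F + F" by (meson add_less_le_mono mult_le_mono1 less_imp_le_nat
        add_le_less_mono)
  also have "\<dots> = F * F" using \<open>j<F\<close> by (cases F) auto
  finally show ?thesis .
qed

lemma enc_inj: assumes "b < F" "d < F" "a * F + b = c * F + (d::nat)" shows "a = c \<and> b = d"
proof -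
  have h1: "(a * F + b) div F = a" "(a * F + b) mod F = b" using assms(1) by auto
  have h2: "(c * F + d) div F = c" "(c * F + d) mod F = d" using assms(2) by auto
  have "a = c" using h1(1) h2(1) assms(3) by simp
  moreover have "b = d" using h1(2) h2(2) assms(3) by simp
  ultimately show ?thesis by simp
qed

lemma minmax_eq: "min (j::nat) k1 = min j k2 \<Longrightarrow> max j k1 = max j k2 \<Longrightarrow> k1 = k2"
  by (metis max_def min_def)

lemma minmax_swap: "min (j1::nat) k1 = min j2 k2 \<Longrightarrow> max j1 k1 = max j2 k2 \<Longrightarrow> (j1 = j2 \<and> k1 = k2) \<or> (j1 = k2 \<and> k1 = j2)"
  by (metis max_def min_def nat_le_linear)

context fixes F :: nat assumes F3: "3 \<le> F"
begin

lemma cr_None: "cr F j k = None \<longleftrightarrow> j = k \<or> j = sc F k" unfolding cr_def by auto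

lemma cr_tri: assumes j: "j<F" and k: "k<F" and c: "cr F j k = Some t" and ge: "F * F \<le> t"
  shows "k = sc F j \<and> t = F*F + j div 3 \<and> j < 3 * tri F \<and> j \<noteq> k \<and> j \<noteq> sc F k"
proof -
  have nn: "\<not> (j = k \<or> j = sc F k)" using c unfolding cr_def by (auto split: if_splits)
  have ks: "k = sc F j"
  proof (rule ccontr)
    assume "k \<noteq> sc F j"
    hence "t = min j k * F + max j k" using c nn unfolding cr_def by auto
    thus False using enc_lt[OF j k] ge by simp
  qed
  hence tt: "t = F*F + j div 3" using c nn unfolding cr_def by auto
  have "j < 3 * tri F"
  proof (rule ccontr)
    assume "\<not> j < 3 * tri F"
    hence "sc F (sc F j) = j" using sc_inv2[OF F3 j] by simp
    thus False using nn ks by simp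
  qed
  thus ?thesis using ks tt nn by simp
qed

lemma cr_pair: assumes j: "j<F" and k: "k<F" and c: "cr F j k = Some t" and lt: "t < F * F"
  shows "t = min j k * F + max j k \<and> k \<noteq> sc F j \<and> j \<noteq> k \<and> j \<noteq> sc F k"
proof -
  have nn: "\<not> (j = k \<or> j = sc F k)" using c unfolding cr_def by (auto split: if_splits)
  have "k \<noteq> sc F j"
  proof
    assume "k = sc F j"
    hence "t = F*F + j div 3" using c nn unfolding cr_def by auto
    thus False using lt by simp
  qed
  thus ?thesis using c nn unfolding cr_def by auto
qed

lemma cr_PDA: "is_PDA (cS F) F F 2 (cr F)"
proof -
  have fin: "finite (cS F)"
  proof -
    have "cS F \<subseteq> {..< F*F + F}"
    proof
      fix t assume "t \<in> cS F"
      then obtain j k where jk: "j<F" "k<F" "cr F j k = Some t" unfolding cS_def by auto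
      show "t \<in> {..< F*F + F}"
      proof (cases "F * F \<le> t")
        case True
        hence "t = F*F + j div 3" using cr_tri[OF jk True] by simp
        moreover have "j div 3 < F" using jk by (meson div_le_dividend le_less_trans)
        ultimately show ?thesis by simp
      next
        case False thus ?thesis by simp
      qed
    qed
    thus ?thesis using finite_subset by blast
  qed
  have c2: "card {j. j < F \<and> cr F j k = None} = 2" if k: "k<F" for k
  proof -
    have "{j. j < F \<and> cr F j k = None} = {k, sc F k}" using k sc_lt[OF F3 k] unfolding cr_None by auto
    thus ?thesis using sc_ne[OF F3 k] by simp
  qed
  have ru: "k1 = k2" if j: "j<F" and k1: "k1<F" and k2: "k2<F" and c1: "cr F j k1 = Some t" and c2: "cr F j k2 = Some t" for j k1 k2 t
  proof (cases "F * F \<le> t")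
    case True thus ?thesis using cr_tri[OF j k1 c1 True] cr_tri[OF j k2 c2 True] by simp
  next
    case False
    hence "t < F*F" by simp
    hence e1: "t = min j k1 * F + max j k1" and e2: "t = min j k2 * F + max j k2"
      using cr_pair[OF j k1 c1] cr_pair[OF j k2 c2] by auto
    have "min j k1 = min j k2 \<and> max j k1 = max j k2"
      by (rule enc_inj) (use e1 e2 j k1 k2 in auto)
    thus ?thesis using minmax_eq by blast
  qed
  have cu: "j1 = j2" if k: "k<F" and j1: "j1<F" and j2: "j2<F" and c1: "cr F j1 k = Some t" and c2: "cr F j2 k = Some t" for k j1 j2 t
  proof (cases "F * F \<le> t")
    case True thus ?thesis using cr_tri[OF j1 k c1 True] cr_tri[OF j2 k c2 True] sc_inj[OF F3 j1 j2] by simp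
  next
    case False
    hence "t < F*F" by simp
    hence e1: "t = min j1 k * F + max j1 k" and e2: "t = min j2 k * F + max j2 k"
      using cr_pair[OF j1 k c1] cr_pair[OF j2 k c2] by auto
    have "min j1 k = min j2 k \<and> max j1 k = max j2 k"
      by (rule enc_inj) (use e1 e2 j1 j2 k in auto)
    thus ?thesis using minmax_eq[of k j1 j2] by (simp add: min.commute max.commute)
  qed
  have c4: "cr F j1 k2 = None \<and> cr F j2 k1 = None"
    if j1: "j1<F" and j2: "j2<F" and k1: "k1<F" and k2: "k2<F" and ne: "(j1,k1) \<noteq> (j2,k2)"
       and c1: "cr F j1 k1 = Some t" and c2: "cr F j2 k2 = Some t" for j1 j2 k1 k2 t
  proof (cases "F * F \<le> t")
    case True
    note T1 = cr_tri[OF j1 k1 c1 True] and T2 = cr_tri[OF j2 k2 c2 True]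
    have jne: "j1 \<noteq> j2" using ne T1 T2 by auto
    have dd: "j1 div 3 = j2 div 3" using T1 T2 by simp
    have "j2 = sc F j1 \<or> j1 = sc F j2" using sc_blk[of j1 F j2] T1 T2 dd jne by simp
    thus ?thesis
    proof
      assume h: "j2 = sc F j1"
      have "sc F k2 = j1" using T1 T2 h sc_tri(3)[of j1 F] by simp
      moreover have "j2 = k1" using T1 h by simp
      ultimately show ?thesis unfolding cr_None using T2 by simp
    next
      assume h: "j1 = sc F j2"
      have "sc F k1 = j2" using T1 T2 h sc_tri(3)[of j2 F] by simp
      moreover have "j1 = k2" using T2 h by simp
      ultimately show ?thesis unfolding cr_None by simp
    qed
  next
    case False
    hence "t < F*F" by simp
    hence e1: "t = min j1 k1 * F + max j1 k1" and e2: "t = min j2 k2 * F + max j2 k2"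
      using cr_pair[OF j1 k1 c1] cr_pair[OF j2 k2 c2] by auto
    have "min j1 k1 = min j2 k2 \<and> max j1 k1 = max j2 k2"
      by (rule enc_inj) (use e1 e2 j1 j2 k1 k2 in auto)
    hence "j1 = k2 \<and> k1 = j2" using minmax_swap ne by blast
    thus ?thesis unfolding cr_None by simp
  qed
  have P2: "\<forall>j<F. \<forall>k<F. \<forall>t. cr F j k = Some t \<longrightarrow> t \<in> cS F" unfolding cS_def by blast
  have P3: "\<forall>k<F. card {j. j < F \<and> cr F j k = None} = 2" using c2 by blast
  have P4: "\<forall>j<F. \<forall>k1<F. \<forall>k2<F. \<forall>t. cr F j k1 = Some t \<and> cr F j k2 = Some t \<longrightarrow> k1 = k2"
    using ru by blast
  have P5: "\<forall>k<F. \<forall>j1<F. \<forall>j2<F. \<forall>t. cr F j1 k = Some t \<and> cr F j2 k = Some t \<longrightarrow> j1 = j2"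
    using cu by blast
  have P6: "\<forall>j1<F. \<forall>j2<F. \<forall>k1<F. \<forall>k2<F. \<forall>t.
        (j1, k1) \<noteq> (j2, k2) \<and> cr F j1 k1 = Some t \<and> cr F j2 k2 = Some t \<longrightarrow>
        cr F j1 k2 = None \<and> cr F j2 k1 = None"
    using c4 by blast
  show ?thesis unfolding is_PDA_def using fin P2 P3 P4 P5 P6 by (intro conjI)
qed


lemma cr_tri_cell: assumes x: "x < 3 * tri F" shows "cr F x (sc F x) = Some (F*F + x div 3)"
  using sc_tri(4)[OF x] sc_tri(5)[OF x] unfolding cr_def by auto

lemma constr: "\<exists>S r. is_PDA S F F 2 r \<and> 6 * real (card S) \<le> 3 * (real F * real F - 2 * real F) - real (3 * tri F)"
proof -
  interpret I: P2 "cS F" F "cr F" by (rule P2.intro[OF cr_PDA])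
  have tF: "3 * tri F \<le> F" using tri_props[OF F3] by simp
  have mlt2: "I.mlt j k \<ge> 2" if j: "j<F" and k: "k \<in> I.Fl j" for j k
  proof -
    from k obtain t where t: "cr F j k = Some t" and kF: "k<F" by (rule I.Fl_obt)
    have "\<exists>c. c \<in> I.occ t \<and> c \<noteq> (j,k)"
    proof (cases "F * F \<le> t")
      case True
      note T = cr_tri[OF j kF t True]
      have s1: "sc F j < 3 * tri F" using sc_tri(1)[OF conjunct1[OF conjunct2[OF conjunct2 [OF T]]]] .
      have "cr F (sc F j) (sc F (sc F j)) = Some (F*F + sc F j div 3)" by (rule cr_tri_cell[OF s1])
      hence "cr F (sc F j) (sc F (sc F j)) = Some t" using T sc_tri(2)[of j F] by simp
      moreover have "sc F j < F" "sc F (sc F j) < F" using sc_lt[OF F3] j by auto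
      moreover have "sc F j \<noteq> j" using sc_ne[OF F3 j] .
      ultimately show ?thesis unfolding I.occ_def by (intro exI[of _ "(sc F j, sc F (sc F j))"]) auto
    next
      case False
      hence "t < F*F" by simp
      note Q = cr_pair[OF j kF t this]
      have "cr F k j = Some (min k j * F + max k j)" using Q unfolding cr_def by auto
      hence "cr F k j = Some t" using Q by (simp add: min.commute max.commute)
      thus ?thesis unfolding I.occ_def using Q j kF by (intro exI[of _ "(k,j)"]) auto
    qed
    then obtain c where c: "c \<in> I.occ t" "c \<noteq> (j,k)" by blast
    have "(j,k) \<in> I.occ t" using I.occI[OF j kF t] .
    hence "{(j,k), c} \<subseteq> I.occ t" using c by auto
    hence "card {(j,k), c} \<le> card (I.occ t)" by (intro card_mono) auto
    thus ?thesis unfolding I.mlt_def using t c by simp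
  qed
  have sg0: "I.sg j = 0" if j: "j<F" for j
  proof -
    have "{k \<in> I.Fl j. I.mlt j k = 1} = {}" using mlt2[OF j] by force
    thus ?thesis unfolding I.sg_def by simp
  qed
  have tr1: "I.tr j \<ge> 1" if j: "j < 3 * tri F" for j
  proof -
    have jF: "j<F" using j tF by simp
    have s1: "sc F j < 3 * tri F" and s2: "sc F (sc F j) < 3 * tri F" using sc_tri(1) j by auto
    define t where "t = F*F + j div 3"
    have c1: "cr F j (sc F j) = Some t" unfolding t_def by (rule cr_tri_cell[OF j])
    have c2: "cr F (sc F j) (sc F (sc F j)) = Some t" unfolding t_def using cr_tri_cell[OF s1] sc_tri(2)[OF j] by simp
    have c3: "cr F (sc F (sc F j)) j = Some t" unfolding t_def
      using cr_tri_cell[OF s2] sc_tri(2)[OF s1] sc_tri(2)[OF j] sc_tri(3)[OF j] by simp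
    have lt: "sc F j < F" "sc F (sc F j) < F" using s1 s2 tF by auto
    have sub: "{(j, sc F j), (sc F j, sc F (sc F j)), (sc F (sc F j), j)} \<subseteq> I.occ t"
      unfolding I.occ_def using c1 c2 c3 lt jF by auto
    have d1: "sc F j \<noteq> j" using sc_tri(5)[OF j] .
    have d2: "sc F (sc F j) \<noteq> j" using sc_tri(4)[OF j] .
    have d3: "sc F (sc F j) \<noteq> sc F j" using sc_tri(5)[OF s1] .
    have "card {(j, sc F j), (sc F j, sc F (sc F j)), (sc F (sc F j), j)} = 3" using d1 d2 d3 by auto
    hence "3 \<le> card (I.occ t)" using sub card_mono[OF I.finocc sub] by simp
    moreover have scF: "sc F j \<in> I.Fl j" unfolding I.Fl_def using c1 lt by auto
    ultimately have "I.mlt j (sc F j) = 3" using I.mlt_le3[OF jF scF] c1 unfolding I.mlt_def by simp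
    hence "sc F j \<in> {k \<in> I.Fl j. I.mlt j k = 3}" using scF by simp
    hence "{k \<in> I.Fl j. I.mlt j k = 3} \<noteq> {}" by blast
    moreover have "finite {k \<in> I.Fl j. I.mlt j k = 3}" by simp
    ultimately show ?thesis unfolding I.tr_def by (simp add: Suc_le_eq card_gt_0_iff)
  qed
  have T: "3 * tri F \<le> (\<Sum>j<F. I.tr j)"
  proof -
    have "3 * tri F = (\<Sum>j<3 * tri F. (1::nat))" by simp
    also have "\<dots> \<le> (\<Sum>j<3 * tri F. I.tr j)" using tr1 by (intro sum_mono) auto
    also have "\<dots> \<le> (\<Sum>j<F. I.tr j)" using tF by (intro sum_mono2) auto
    finally show ?thesis .
  qed
  have U: "6 * real (card (I.sym ` I.Cl)) \<le> 3 * (real F * real F - 2 * real F) - real (3 * tri F)"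
    by (rule I.upper[OF sg0 T])
  have "I.sym ` I.Cl = cS F"
    unfolding I.sym_def I.Cl_def I.Fl_def cS_def by force
  thus ?thesis using U cr_PDA by auto
qed

end

lemma sval: assumes F3: "3 \<le> F"
  shows "int F * (3 * int F - 7) \<le> 6 * int (s_PDA F F 2) \<and> 6 * int (s_PDA F F 2) \<le> int F * (3 * int F - 7) + 4"
proof -
  obtain S0 r0 where h: "is_PDA S0 F F 2 r0" and hc: "6 * real (card S0) \<le> 3 * (real F * real F - 2 * real F) - real (3 * tri F)"
    using constr[OF F3] by blast
  define Pn where "Pn n = (\<exists>S r. is_PDA S F F 2 r \<and> card S = n)" for n
  have P0: "Pn (card S0)" unfolding Pn_def using h by blast
  have sdef: "s_PDA F F 2 = (LEAST n. Pn n)" unfolding s_PDA_def Pn_def by simp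
  have le: "(LEAST n. Pn n) \<le> card S0" by (rule Least_le[of Pn, OF P0])
  have "Pn (LEAST n. Pn n)" by (rule LeastI[of Pn, OF P0])
  then obtain S r where hS: "is_PDA S F F 2 r" and cS': "card S = (LEAST n. Pn n)" unfolding Pn_def by blast
  have lo: "int F * (3 * int F - 7) \<le> 6 * int (card S)" by (rule P2.lower[OF P2.intro[OF hS] F3])
  have "real_of_int (6 * int (card S0)) \<le> real_of_int (3 * (int F * int F - 2 * int F) - int (3 * tri F))"
    using hc by simp
  hence up0: "6 * int (card S0) \<le> 3 * (int F * int F - 2 * int F) - int (3 * tri F)" by (simp only: of_int_le_iff)
  have tp: "3 * tri F \<le> F" "F - 3 * tri F \<le> 4" using tri_props[OF F3] by auto
  hence "int F \<le> int (3 * tri F) + 4" by linarith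
  hence "3 * (int F * int F - 2 * int F) - int (3 * tri F) \<le> int F * (3 * int F - 7) + 4"
    by (simp add: algebra_simps)
  hence "6 * int (card S0) \<le> int F * (3 * int F - 7) + 4" using up0 by linarith
  moreover have "int (s_PDA F F 2) \<le> int (card S0)" using le sdef by simp
  moreover have "int (s_PDA F F 2) = int (card S)" using cS' sdef by simp
  ultimately show ?thesis using lo by linarith
qed

theorem mainTheorem19:
  fixes F :: nat
  assumes "F \<ge> 6"
  shows "int (s_PDA F F 2) = 3 * int F - 8 + int (s_PDA (F - 3) (F - 3) 2)"
proof -
  have A: "int F * (3 * int F - 7) \<le> 6 * int (s_PDA F F 2) \<and> 6 * int (s_PDA F F 2) \<le> int F * (3 * int F - 7) + 4"
    by (rule sval) (use assms in simp)
  have B0: "int (F-3) * (3 * int (F-3) - 7) \<le> 6 * int (s_PDA (F-3) (F-3) 2) \<and> 6 * int (s_PDA (F-3) (F-3) 2) \<le> int (F-3) * (3 * int (F-3) - 7) + 4"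
    by (rule sval) (use assms in simp)
  have iF: "int (F - 3) = int F - 3" using assms by simp
  define a where "a = int (s_PDA F F 2)"
  define b where "b = int (s_PDA (F-3) (F-3) 2)"
  define x where "x = int F"
  define y where "y = x * x"
  have e1: "int F * (3 * int F - 7) = 3 * y - 7 * x" unfolding y_def x_def by (simp add: algebra_simps)
  have e2: "int (F-3) * (3 * int (F-3) - 7) = 3 * y - 25 * x + 48" unfolding y_def x_def iF by (simp add: algebra_simps)
  have A': "3 * y - 7 * x \<le> 6 * a \<and> 6 * a \<le> 3 * y - 7 * x + 4" using A unfolding e1 a_def .
  have B': "3 * y - 25 * x + 48 \<le> 6 * b \<and> 6 * b \<le> 3 * y - 25 * x + 48 + 4" using B0 unfolding e2 b_def .
  define k where "k = a - b - (3 * x - 8)"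
  have a1: "3 * y - 7 * x \<le> 6 * a" and a2: "6 * a \<le> 3 * y - 7 * x + 4" using A' by auto
  have b1: "3 * y - 25 * x + 48 \<le> 6 * b" and b2: "6 * b \<le> 3 * y - 25 * x + 48 + 4" using B' by auto
  have k1: "6 * k \<le> 4" unfolding k_def using a2 b1 by (simp add: algebra_simps)
  have k2: "- 4 \<le> 6 * k" unfolding k_def using a1 b2 by (simp add: algebra_simps)
  have "k = 0"
  proof (rule ccontr)
    assume "k \<noteq> 0"
    hence "k \<ge> 1 \<or> k \<le> -1" by linarith
    thus False using k1 k2 by linarith
  qed
  hence "a = 3 * x - 8 + b" unfolding k_def by linarith
  thus ?thesis unfolding a_def b_def x_def .
qed


end
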